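(* If $C$ is an identifying code of $K_n\times K_m$ with $cs(C)=n-1$ and $rs(C)=m-1$, then no vertex of $C$ is isolated in $C$.
   Context: $K_n\times K_m$ is the direct product of complete graphs: vertex set $[n]\times[m]$, with $(i,r)$ adjacent to $(j,s)$ iff $i\ne j$ and $r \ne s$. An identifying code is a dominating set $C$ with $N[x]\cap C\ne N[y]\cap C$ for all distinct vertices $x,y$ ($N[x]$ the closed neighborhood). Columns: $C_i=\{(i,t):t\in[m]\}$; rows: $R_r=\{(k,r):k\in[n]\}$. $cs(C)$ (resp. $rs(C)$) is the number of columns (resp. rows) meeting $C$. A vertex $v=(i,r)$ is isolated in $C$ if $C\cap C_i=\{v\}$ and $C\cap R_r=\{v\}$. *)

theory Defs
  imports Main
begin

text \<open>Direct product of complete graphs K_n x K_m on vertex set [n] x [m], [n] = {1..n}.\<close>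

definition verts :: "nat \<Rightarrow> nat \<Rightarrow> (nat \<times> nat) set" where
  "verts n m = {1..n} \<times> {1..m}"

definition adj :: "nat \<times> nat \<Rightarrow> nat \<times> nat \<Rightarrow> bool" where
  "adj x y \<longleftrightarrow> fst x \<noteq> fst y \<and> snd x \<noteq> snd y"

definition cnbhd :: "nat \<Rightarrow> nat \<Rightarrow> nat \<times> nat \<Rightarrow> (nat \<times> nat) set" where
  "cnbhd n m x = {y \<in> verts n m. y = x \<or> adj x y}"

definition identifying_code :: "nat \<Rightarrow> nat \<Rightarrow> (nat \<times> nat) set \<Rightarrow> bool" where
  "identifying_code n m C \<longleftrightarrow> C \<subseteq> verts n m
     \<and> (\<forall>x \<in> verts n m. cnbhd n m x \<inter> C \<noteq> {})
     \<and> (\<forall>x \<in> verts n m. \<forall>y \<in> verts n m. x \<noteq> y \<longrightarrow> cnbhd n m x \<inter> C \<noteq> cnbhd n m y \<inter> C)"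

definition col :: "nat \<Rightarrow> nat \<Rightarrow> nat \<Rightarrow> (nat \<times> nat) set" where
  "col n m i = {(i, t) | t. t \<in> {1..m}}"

definition row :: "nat \<Rightarrow> nat \<Rightarrow> nat \<Rightarrow> (nat \<times> nat) set" where
  "row n m r = {(k, r) | k. k \<in> {1..n}}"

definition cs :: "nat \<Rightarrow> nat \<Rightarrow> (nat \<times> nat) set \<Rightarrow> nat" where
  "cs n m C = card {i \<in> {1..n}. col n m i \<inter> C \<noteq> {}}"

definition rs :: "nat \<Rightarrow> nat \<Rightarrow> (nat \<times> nat) set \<Rightarrow> nat" where
  "rs n m C = card {r \<in> {1..m}. row n m r \<inter> C \<noteq> {}}"

definition isolated_in :: "nat \<Rightarrow> nat \<Rightarrow> (nat \<times> nat) set \<Rightarrow> nat \<times> nat \<Rightarrow> bool" where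
  "isolated_in n m C v \<longleftrightarrow> C \<inter> col n m (fst v) = {v} \<and> C \<inter> row n m (snd v) = {v}"

end

theory Submission
  imports Defs
begin

lemma exists_empty:
  assumes "card {i \<in> {1..n::nat}. P i} = n - 1" "n \<ge> 1"
  shows "\<exists>a \<in> {1..n}. \<not> P a"
proof (rule ccontr)
  assume "\<not> ?thesis"
  then have "{i \<in> {1..n}. P i} = {1..n}" by auto
  then show False using assms by simp
qed

theorem mainTheorem11:
  fixes n m :: nat and C :: "(nat \<times> nat) set"
  assumes "identifying_code n m C"
    and "cs n m C = n - 1"
    and "rs n m C = m - 1"
  shows "\<forall>v \<in> C. \<not> isolated_in n m C v"
proof (intro ballI notI)
  fix v assume vC: "v \<in> C" and iso: "isolated_in n m C v"
  have sub: "C \<subseteq> verts n m" using assms(1) unfolding identifying_code_def by blast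
  have vv: "v \<in> verts n m" using sub vC by blast
  then have n1: "n \<ge> 1" and m1: "m \<ge> 1" unfolding verts_def by auto
  obtain a where a: "a \<in> {1..n}" "col n m a \<inter> C = {}"
    using exists_empty[OF assms(2)[unfolded cs_def] n1] by auto
  obtain b where b: "b \<in> {1..m}" "row n m b \<inter> C = {}"
    using exists_empty[OF assms(3)[unfolded rs_def] m1] by auto
  have ab: "(a,b) \<in> verts n m" using a b unfolding verts_def by auto
  have abC: "(a,b) \<notin> C" using a b unfolding col_def by auto
  have e1: "cnbhd n m (a,b) \<inter> C = C"
  proof
    show "C \<subseteq> cnbhd n m (a, b) \<inter> C"
    proof
      fix y assume yC: "y \<in> C"
      then have yv: "y \<in> verts n m" using sub by blast
      have "fst y \<noteq> a" using yC yv a unfolding col_def verts_def by (cases y) auto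
      moreover have "snd y \<noteq> b" using yC yv b unfolding row_def verts_def by (cases y) auto
      ultimately show "y \<in> cnbhd n m (a, b) \<inter> C" using yC yv unfolding cnbhd_def adj_def by auto
    qed
  qed auto
  have e2: "cnbhd n m v \<inter> C = C"
  proof
    show "C \<subseteq> cnbhd n m v \<inter> C"
    proof
      fix y assume yC: "y \<in> C"
      then have yv: "y \<in> verts n m" using sub by blast
      have "y = v \<or> adj v y"
      proof (rule ccontr)
        assume h: "\<not> (y = v \<or> adj v y)"
        then have "fst y = fst v \<or> snd y = snd v" unfolding adj_def by auto
        then show False
        proof
          assume "fst y = fst v"
          then have "y \<in> C \<inter> col n m (fst v)" using yC yv unfolding col_def verts_def by (cases y) auto
          then show False using iso h unfolding isolated_in_def by auto
        next
          assume "snd y = snd v"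
          then have "y \<in> C \<inter> row n m (snd v)" using yC yv unfolding row_def verts_def by (cases y) auto
          then show False using iso h unfolding isolated_in_def by auto
        qed
      qed
      then show "y \<in> cnbhd n m v \<inter> C" using yC yv unfolding cnbhd_def by auto
    qed
  qed auto
  have "v \<noteq> (a,b)" using vC abC by auto
  then have "cnbhd n m v \<inter> C \<noteq> cnbhd n m (a,b) \<inter> C"
    using assms(1) vv ab unfolding identifying_code_def by blast
  then show False using e1 e2 by simp
qed

end
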